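(* For all $k,l\in\{1,\dots,[n/2]\}$ one has $\{J_k,J_l\}=0$, $\{F_k,F_l\}=0$ and $\{F_k,H\}=0$. Moreover, when $n$ is odd, the function $C=\dfrac{x_1x_3\cdots x_n}{x_2x_4\cdots x_{n-1}}$ is a Casimir function of the bracket $\{\cdot,\cdot\}$, i.e. $\{C,x_j\}=0$ for all $j=1,\dots,n$.
   Context: Let $n\ge1$, $(a_1,\dots,a_n)\in\mathbb R^n\setminus\{0\}$. On $\mathbb R^n$ with coordinates $x_1,\dots,x_n$ consider the Poisson bracket $\{x_i,x_j\}=x_ix_j$ for $1\le i<j\le n$ (extended by skew-symmetry and the Leibniz rule; rational functions are considered on the open dense set where their denominators do not vanish). Let $H=a_1x_1+\dots+a_nx_n$, $v_0:=0$ and $v_i:=a_1x_1+\dots+a_ix_i$ for $i=1,\dots,n$ (so $v_n=H$). For $k=1,\dots,[n/2]$ let $J_k:=\dfrac{x_1x_3\cdots x_{2k-1}}{x_2x_4\cdots x_{2k}}$. For $k=1,\dots,[(n+1)/2]$ let $F_k:=v_{2k-1}\dfrac{x_{2k+1}x_{2k+3}\cdots x_n}{x_{2k}x_{2k+2}\cdots x_{n-1}}$ if $n$ is odd, and $F_k:=v_{2k}\dfrac{x_{2k+2}x_{2k+4}\cdots x_n}{x_{2k+1}x_{2k+3}\cdots x_{n-1}}$ if $n$ is even (empty products equal $1$, so $F_{[(n+1)/2]}=H$). *)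

theory Defs
  imports "HOL-Analysis.Analysis"
begin

text \<open>Points of R^n are represented as functions x :: nat => real, coordinates x 1, ..., x n.
  Functions on R^n are maps (nat => real) => real that only depend on coordinates 1..n.\<close>

definition pd :: "((nat \<Rightarrow> real) \<Rightarrow> real) \<Rightarrow> nat \<Rightarrow> (nat \<Rightarrow> real) \<Rightarrow> real" where
  "pd f i x = deriv (\<lambda>t. f (x(i := t))) (x i)"

definition pimat :: "nat \<Rightarrow> nat \<Rightarrow> (nat \<Rightarrow> real) \<Rightarrow> real" where
  "pimat i j x = (if i < j then x i * x j else if j < i then - (x i * x j) else 0)"

definition pbracket :: "nat \<Rightarrow> ((nat \<Rightarrow> real) \<Rightarrow> real) \<Rightarrow> ((nat \<Rightarrow> real) \<Rightarrow> real) \<Rightarrow> (nat \<Rightarrow> real) \<Rightarrow> real" where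
  "pbracket n f g x = (\<Sum>i\<in>{1..n}. \<Sum>j\<in>{1..n}. pimat i j x * pd f i x * pd g j x)"

definition vfun :: "(nat \<Rightarrow> real) \<Rightarrow> nat \<Rightarrow> (nat \<Rightarrow> real) \<Rightarrow> real" where
  "vfun a i x = (\<Sum>j\<in>{1..i}. a j * x j)"

definition Hfun :: "nat \<Rightarrow> (nat \<Rightarrow> real) \<Rightarrow> (nat \<Rightarrow> real) \<Rightarrow> real" where
  "Hfun n a = vfun a n"

definition Jfun :: "nat \<Rightarrow> (nat \<Rightarrow> real) \<Rightarrow> real" where
  "Jfun k x = (\<Prod>m\<in>{1..k}. x (2*m - 1)) / (\<Prod>m\<in>{1..k}. x (2*m))"

definition Ffun :: "nat \<Rightarrow> (nat \<Rightarrow> real) \<Rightarrow> nat \<Rightarrow> (nat \<Rightarrow> real) \<Rightarrow> real" where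
  "Ffun n a k x =
     (if odd n then
        vfun a (2*k - 1) x * (\<Prod>m\<in>{k+1..(n+1) div 2}. x (2*m - 1)) / (\<Prod>m\<in>{k..(n-1) div 2}. x (2*m))
      else
        vfun a (2*k) x * (\<Prod>m\<in>{k+1..n div 2}. x (2*m)) / (\<Prod>m\<in>{k+1..n div 2}. x (2*m - 1)))"

definition Cfun :: "nat \<Rightarrow> (nat \<Rightarrow> real) \<Rightarrow> real" where
  "Cfun n x = (\<Prod>m\<in>{1..(n+1) div 2}. x (2*m - 1)) / (\<Prod>m\<in>{1..(n-1) div 2}. x (2*m))"

end

theory Submission
  imports Defs
begin


lemma prod_upd:
  assumes "finite A" "inj_on g A"
  shows "(\<Prod>m\<in>A. (x(i:=t)) (g m)) = (if i \<in> g`A then t else 1) * (\<Prod>m\<in>{m\<in>A. g m \<noteq> i}. x (g m))"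
proof (cases "i \<in> g`A")
  case True
  then obtain m0 where m0: "m0 \<in> A" "g m0 = i" by auto
  have e: "{m\<in>A. g m \<noteq> i} = A - {m0}" using m0 assms(2) by (auto simp: inj_on_def)
  have "(\<Prod>m\<in>A. (x(i:=t)) (g m)) = (x(i:=t)) (g m0) * (\<Prod>m\<in>A-{m0}. (x(i:=t)) (g m))"
    using m0 assms(1) by (simp add: prod.remove)
  also have "(\<Prod>m\<in>A-{m0}. (x(i:=t)) (g m)) = (\<Prod>m\<in>A-{m0}. x (g m))"
    by (rule prod.cong) (use e in auto)
  finally show ?thesis using True m0 e by simp
next
  case False
  then have "{m\<in>A. g m \<noteq> i} = A" by auto
  moreover have "(\<Prod>m\<in>A. (x(i:=t)) (g m)) = (\<Prod>m\<in>A. x (g m))"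
    by (rule prod.cong) (use False in auto)
  ultimately show ?thesis using False by simp
qed

lemma mono_deriv:
  assumes "finite A" "finite B" "inj_on g A" "inj_on h B" "g`A \<inter> h`B = {}"
    "\<forall>m\<in>A. x (g m) \<noteq> 0" "\<forall>m\<in>B. x (h m) \<noteq> 0"
  shows "((\<lambda>t. (\<Prod>m\<in>A. (x(i:=t)) (g m)) / (\<Prod>m\<in>B. (x(i:=t)) (h m))) has_real_derivative
     ((\<Prod>m\<in>A. x (g m)) / (\<Prod>m\<in>B. x (h m)) * ((if i\<in>g`A then 1 else 0) - (if i\<in>h`B then 1 else 0)) / x i)) (at (x i))"
proof -
  define c1 where "c1 = (\<Prod>m\<in>{m\<in>A. g m \<noteq> i}. x (g m))"
  define c2 where "c2 = (\<Prod>m\<in>{m\<in>B. h m \<noteq> i}. x (h m))"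
  have c1: "c1 \<noteq> 0" unfolding c1_def using assms(1,6) by (auto simp: prod_zero_iff)
  have c2: "c2 \<noteq> 0" unfolding c2_def using assms(2,7) by (auto simp: prod_zero_iff)
  have f: "(\<lambda>t. (\<Prod>m\<in>A. (x(i:=t)) (g m)) / (\<Prod>m\<in>B. (x(i:=t)) (h m))) =
     (\<lambda>t. ((if i \<in> g`A then t else 1) * c1) / ((if i \<in> h`B then t else 1) * c2))"
    unfolding c1_def c2_def by (rule ext) (simp only: prod_upd[OF assms(1,3)] prod_upd[OF assms(2,4)])
  have xA: "(\<Prod>m\<in>A. x (g m)) = (if i \<in> g`A then x i else 1) * c1"
    using prod_upd[OF assms(1,3), of x i "x i"] unfolding c1_def by simp
  have xB: "(\<Prod>m\<in>B. x (h m)) = (if i \<in> h`B then x i else 1) * c2"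
    using prod_upd[OF assms(2,4), of x i "x i"] unfolding c2_def by simp
  consider "i \<in> g`A" "i \<notin> h`B" | "i \<notin> g`A" "i \<in> h`B" | "i \<notin> g`A" "i \<notin> h`B"
    using assms(5) by blast
  then show ?thesis
  proof cases
    case 1
    have xi: "x i \<noteq> 0" using 1 assms(6) by auto
    have "((\<lambda>t. t * c1 / (1 * c2)) has_real_derivative c1 / c2) (at (x i))"
      by (auto intro!: derivative_eq_intros simp: c2)
    then show ?thesis unfolding f xA xB using 1 xi by simp
  next
    case 2
    have xi: "x i \<noteq> 0" using 2 assms(7) by auto
    have "((\<lambda>t. 1 * c1 / (t * c2)) has_real_derivative (0 * (x i * c2) - c1 * c2) / ((x i * c2) * (x i * c2))) (at (x i))"
      by (rule derivative_eq_intros refl | simp add: xi c2)+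
    then show ?thesis unfolding f xA xB using 2 xi c2 by (simp add: field_simps power2_eq_square)
  next
    case 3
    then show ?thesis unfolding f xA xB by simp
  qed
qed

lemma vfun_upd: "vfun a p (x(i:=t)) = vfun a p x + (if 1 \<le> i \<and> i \<le> p then a i * (t - x i) else 0)"
proof (cases "1 \<le> i \<and> i \<le> p")
  case True
  have "vfun a p (x(i:=t)) = a i * t + (\<Sum>j\<in>{1..p}-{i}. a j * x j)"
    unfolding vfun_def using True by (simp add: sum.remove[of _ i])
  moreover have "vfun a p x = a i * x i + (\<Sum>j\<in>{1..p}-{i}. a j * x j)"
    unfolding vfun_def using True by (simp add: sum.remove[of _ i])
  ultimately show ?thesis using True by (simp add: algebra_simps)
next
  case False
  then show ?thesis unfolding vfun_def by (auto intro!: sum.cong)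
qed

lemma vfun_deriv: "((\<lambda>t. vfun a p (x(i:=t))) has_real_derivative (if 1\<le>i\<and>i\<le>p then a i else 0)) (at (x i))"
  unfolding vfun_upd by (auto intro!: derivative_eq_intros)

definition ev :: "('b \<Rightarrow> nat) \<Rightarrow> 'b set \<Rightarrow> ('c \<Rightarrow> nat) \<Rightarrow> 'c set \<Rightarrow> nat \<Rightarrow> real" where
  "ev g A h B i = (if i\<in>g`A then 1 else 0) - (if i\<in>h`B then 1 else 0)"

lemma LD_mono:
  assumes "finite A" "finite B" "inj_on g A" "inj_on h B" "g`A \<inter> h`B = {}"
    "\<forall>m\<in>A. x (g m) \<noteq> 0" "\<forall>m\<in>B. x (h m) \<noteq> 0" "x i \<noteq> 0"
  shows "x i * pd (\<lambda>y. (\<Prod>m\<in>A. y (g m)) / (\<Prod>m\<in>B. y (h m))) i x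
     = (\<Prod>m\<in>A. x (g m)) / (\<Prod>m\<in>B. x (h m)) * ev g A h B i"
  unfolding pd_def ev_def using DERIV_imp_deriv[OF mono_deriv[OF assms(1-7), of i]] assms(8) by simp

lemma LD_vmono:
  assumes "finite A" "finite B" "inj_on g A" "inj_on h B" "g`A \<inter> h`B = {}"
    "\<forall>m\<in>A. x (g m) \<noteq> 0" "\<forall>m\<in>B. x (h m) \<noteq> 0" "x i \<noteq> 0"
    "\<forall>j\<in>g`A \<union> h`B. p < j"
  shows "x i * pd (\<lambda>y. vfun a p y * (\<Prod>m\<in>A. y (g m)) / (\<Prod>m\<in>B. y (h m))) i x
     = ((if 1\<le>i\<and>i\<le>p then a i * x i else 0) + vfun a p x * ev g A h B i) * ((\<Prod>m\<in>A. x (g m)) / (\<Prod>m\<in>B. x (h m)))"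
proof -
  have d: "((\<lambda>t. vfun a p (x(i:=t)) * ((\<Prod>m\<in>A. (x(i:=t)) (g m)) / (\<Prod>m\<in>B. (x(i:=t)) (h m)))) has_real_derivative
     (if 1\<le>i\<and>i\<le>p then a i else 0) * ((\<Prod>m\<in>A. x (g m)) / (\<Prod>m\<in>B. x (h m))) +
     ((\<Prod>m\<in>A. x (g m)) / (\<Prod>m\<in>B. x (h m)) * ((if i\<in>g`A then 1 else 0) - (if i\<in>h`B then 1 else 0)) / x i) * vfun a p x) (at (x i))"
    using DERIV_mult[OF vfun_deriv[of a p x i] mono_deriv[OF assms(1-7), of i]] by simp
  have e: "(\<lambda>y. vfun a p y * (\<Prod>m\<in>A. y (g m)) / (\<Prod>m\<in>B. y (h m))) = (\<lambda>y. vfun a p y * ((\<Prod>m\<in>A. y (g m)) / (\<Prod>m\<in>B. y (h m))))"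
    by simp
  have n: "i \<le> p \<Longrightarrow> i\<notin>g`A \<and> i\<notin>h`B" using assms(9) by (meson Un_iff not_less)
  show ?thesis unfolding e pd_def ev_def DERIV_imp_deriv[OF d] using assms(8) n
    by (cases "1\<le>i\<and>i\<le>p") (auto simp add: field_simps)
qed



definition sg :: "nat \<Rightarrow> nat \<Rightarrow> real" where
  "sg i j = (if i < j then 1 else if j < i then -1 else 0)"

definition ps :: "(nat \<Rightarrow> real) \<Rightarrow> nat \<Rightarrow> real" where
  "ps a m = (\<Sum>i\<in>{1..m}. a i)"

lemma ps0[simp]: "ps a 0 = 0" by (simp add: ps_def)
lemma psSuc[simp]: "ps a (Suc m) = ps a m + a (Suc m)"
  by (simp add: ps_def atLeastAtMostSuc_conv add.commute)

lemma Q_formula: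
  "(\<Sum>i\<in>{1..N}. \<Sum>j\<in>{1..N}. sg i j * a i * b j) = (\<Sum>m\<in>{1..N}. ps a (m-1) * ps b m - ps a m * ps b (m-1))"
proof (induction N)
  case 0 then show ?case by simp
next
  case (Suc N)
  have s: "{1..Suc N} = insert (Suc N) {1..N}" by (simp add: atLeastAtMostSuc_conv)
  have r1: "(\<Sum>j\<in>{1..N}. sg (Suc N) j * a (Suc N) * b j) = - a (Suc N) * ps b N"
    unfolding ps_def sum_distrib_left by (auto simp: sg_def intro!: sum.cong)
  have r2: "(\<Sum>i\<in>{1..N}. sg i (Suc N) * a i * b (Suc N)) = ps a N * b (Suc N)"
    unfolding ps_def sum_distrib_right by (auto simp: sg_def intro!: sum.cong)
  have "(\<Sum>i\<in>{1..Suc N}. \<Sum>j\<in>{1..Suc N}. sg i j * a i * b j) =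
     (\<Sum>j\<in>{1..N}. sg (Suc N) j * a (Suc N) * b j) + (\<Sum>i\<in>{1..N}. sg i (Suc N) * a i * b (Suc N))
     + (\<Sum>i\<in>{1..N}. \<Sum>j\<in>{1..N}. sg i j * a i * b j)"
    unfolding s by (simp add: sum.distrib sg_def)
  also have "\<dots> = (\<Sum>m\<in>{1..Suc N}. ps a (m-1) * ps b m - ps a m * ps b (m-1))"
    unfolding r1 r2 Suc.IH s by (simp add: algebra_simps)
  finally show ?case .
qed

definition Gs :: "(nat \<Rightarrow> real) \<Rightarrow> nat \<Rightarrow> nat \<Rightarrow> real" where
  "Gs u p i = (if i \<le> p then u i else ps u p * (-1)^(i-p))"

lemma W_le: "m \<le> p \<Longrightarrow> ps (Gs u p) m = ps u m"
  by (induction m) (auto simp: Gs_def)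

lemma W_ge: "ps (Gs u p) (p+d) = (if even d then ps u p else 0)"
proof (induction d)
  case 0 then show ?case by (simp add: W_le)
next
  case (Suc d) then show ?case by (auto simp: Gs_def)
qed

lemma Wf: "ps (Gs u p) m = (if m \<le> p then ps u m else if even (m-p) then ps u p else 0)"
proof (cases "m \<le> p")
  case True then show ?thesis by (simp add: W_le)
next
  case False
  then have "m = p + (m-p)" by simp
  then show ?thesis using False W_ge[of u p "m-p"] by simp
qed

lemma K_formula:
  assumes "p \<le> q" "even (q-p)"
  shows "(\<Sum>m\<in>{1..N}. ps (Gs u p) (m-1) * ps (Gs u q) m - ps (Gs u p) m * ps (Gs u q) (m-1))
     = (if p < N \<and> N \<le> q \<and> odd (N-p) then ps u p * ps u N else 0)"
proof (induction N)
  case 0 then show ?case by simp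
next
  case (Suc N)
  have s: "{1..Suc N} = insert (Suc N) {1..N}" by (simp add: atLeastAtMostSuc_conv)
  have w: "ps (Gs u p) N = (if N \<le> p then ps u N else if even (N-p) then ps u p else 0)"
     "ps (Gs u p) (Suc N) = (if Suc N \<le> p then ps u (Suc N) else if even (Suc N-p) then ps u p else 0)"
     "ps (Gs u q) N = (if N \<le> q then ps u N else if even (N-q) then ps u q else 0)"
     "ps (Gs u q) (Suc N) = (if Suc N \<le> q then ps u (Suc N) else if even (Suc N-q) then ps u q else 0)"
    by (rule Wf)+
  have key: "ps (Gs u p) N * ps (Gs u q) (Suc N) - ps (Gs u p) (Suc N) * ps (Gs u q) N
     + (if p < N \<and> N \<le> q \<and> odd (N-p) then ps u p * ps u N else 0)
     = (if p < Suc N \<and> Suc N \<le> q \<and> odd (Suc N-p) then ps u p * ps u (Suc N) else 0)"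
  proof -
    consider "Suc N \<le> p" | "p \<le> N" "N < q" | "q \<le> N" by linarith
    then show ?thesis
    proof cases
      case 1 then have "Suc N \<le> q" using assms by linarith
      with 1 show ?thesis unfolding w by (simp add: algebra_simps)
    next
      case 2
      then have "Suc N - p = Suc (N - p)" by simp
      then show ?thesis unfolding w using 2 by (cases "even (N-p)") (auto simp: algebra_simps)
    next
      case 3
      have e: "even (N-p) \<longleftrightarrow> even (N-q)" using 3 assms by presburger
      have e2: "even (Suc N-p) \<longleftrightarrow> even (Suc N-q)" using 3 assms by presburger
      have e3: "even (Suc N-q) \<longleftrightarrow> \<not> even (N-q)" using 3 by presburger
      show ?thesis unfolding w using 3 assms e e2 e3 by auto
    qed
  qed
  show ?case unfolding s using Suc.IH key by simp
qed

definition eJ :: "nat \<Rightarrow> nat \<Rightarrow> real" where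
  "eJ k i = (if i \<le> 2*k then (-1)^(i+1) else 0)"

lemma ps_eJ: "ps (eJ k) m = (if m \<le> 2*k \<and> odd m then 1 else 0)"
proof (induction m)
  case (Suc m)
  have "m \<le> 2*k \<and> odd m \<Longrightarrow> Suc m \<le> 2*k" by presburger
  then show ?case using Suc by (auto simp: eJ_def)
qed simp

lemma J_sum_le:
  assumes "k \<le> l"
  shows "(\<Sum>m\<in>{1..N}. ps (eJ k) (m-1) * ps (eJ l) m - ps (eJ k) m * ps (eJ l) (m-1)) = 0"
proof (rule sum.neutral, rule ballI)
  fix m assume m: "m \<in> {1..N}"
  show "ps (eJ k) (m-1) * ps (eJ l) m - ps (eJ k) m * ps (eJ l) (m-1) = 0"
  proof (cases "m \<le> 2*k")
    case True
    then show ?thesis using assms m by (auto simp: ps_eJ)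
  next
    case False
    then have "\<not> (m - 1 \<le> 2*k \<and> odd (m-1))" by presburger
    then show ?thesis using False by (auto simp: ps_eJ)
  qed
qed

lemma J_sum:
  "(\<Sum>m\<in>{1..N}. ps (eJ k) (m-1) * ps (eJ l) m - ps (eJ k) m * ps (eJ l) (m-1)) = 0"
proof (cases "k \<le> l")
  case True then show ?thesis by (rule J_sum_le)
next
  case False
  then have "(\<Sum>m\<in>{1..N}. ps (eJ l) (m-1) * ps (eJ k) m - ps (eJ l) m * ps (eJ k) (m-1)) = 0"
    by (intro J_sum_le) simp
  then have "- (\<Sum>m\<in>{1..N}. ps (eJ l) (m-1) * ps (eJ k) m - ps (eJ l) m * ps (eJ k) (m-1)) = 0" by simp
  then show ?thesis unfolding sum_negf[symmetric] by (simp add: algebra_simps)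
qed

definition eC :: "nat \<Rightarrow> real" where "eC i = (-1)^(i+1)"

lemma ps_eC: "ps eC m = (if odd m then 1 else 0)"
  by (induction m) (auto simp: eC_def)

lemma ps_delta: assumes "1 \<le> j" shows "ps (\<lambda>i. if i = j then c else 0) m = (if j \<le> m then c else 0)"
  using assms by (induction m) (auto simp: le_Suc_eq)

lemma C_sum:
  assumes "1 \<le> j"
  shows "(\<Sum>m\<in>{1..N}. ps eC (m-1) * ps (\<lambda>i. if i = j then c else 0) m - ps eC m * ps (\<lambda>i. if i = j then c else 0) (m-1))
    = (if j \<le> N \<and> even N then c else 0)"
proof (induction N)
  case 0 then show ?case using assms by simp
next
  case (Suc N)
  have s: "{1..Suc N} = insert (Suc N) {1..N}" by (simp add: atLeastAtMostSuc_conv)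
  show ?case unfolding s using Suc.IH assms
    by (cases "j \<le> N"; cases "j = Suc N") (auto simp: ps_delta ps_eC)
qed



lemma pbracket_LD:
  "pbracket n f g x = (\<Sum>i\<in>{1..n}. \<Sum>j\<in>{1..n}. sg i j * (x i * pd f i x) * (x j * pd g j x))"
  unfolding pbracket_def by (intro sum.cong refl) (simp add: pimat_def sg_def)

lemma bracket_scaled:
  assumes "\<forall>i\<in>{1..n}. x i * pd f i x = cf * a i" "\<forall>j\<in>{1..n}. x j * pd g j x = cg * b j"
  shows "pbracket n f g x = cf * cg * (\<Sum>m\<in>{1..n}. ps a (m-1) * ps b m - ps a m * ps b (m-1))"
proof -
  have "pbracket n f g x = (\<Sum>i\<in>{1..n}. \<Sum>j\<in>{1..n}. (cf * cg) * (sg i j * a i * b j))"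
    unfolding pbracket_LD using assms by (intro sum.cong refl) (simp add: algebra_simps)
  also have "\<dots> = cf * cg * (\<Sum>i\<in>{1..n}. \<Sum>j\<in>{1..n}. sg i j * a i * b j)"
    by (simp add: sum_distrib_left)
  finally show ?thesis unfolding Q_formula .
qed

lemma mem_odd: "1 \<le> (a::nat) \<Longrightarrow> (i \<in> (\<lambda>m. 2*m-1)`{a..b}) = (odd i \<and> 2*a-1 \<le> i \<and> i \<le> 2*b-1)"
proof
  assume "1 \<le> a" "i \<in> (\<lambda>m. 2*m-1)`{a..b}"
  then show "odd i \<and> 2*a-1 \<le> i \<and> i \<le> 2*b-1" by auto
next
  assume a: "1 \<le> a" "odd i \<and> 2*a-1 \<le> i \<and> i \<le> 2*b-1"
  then have "(i+1) div 2 \<in> {a..b}" "i = 2*((i+1) div 2) - 1" by auto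
  then show "i \<in> (\<lambda>m. 2*m-1)`{a..b}" by blast
qed

lemma mem_even: "(i \<in> (\<lambda>m::nat. 2*m)`{a..b}) = (even i \<and> 2*a \<le> i \<and> i \<le> 2*b)"
proof
  assume "i \<in> (\<lambda>m. 2*m)`{a..b}"
  then show "even i \<and> 2*a \<le> i \<and> i \<le> 2*b" by auto
next
  assume a: "even i \<and> 2*a \<le> i \<and> i \<le> 2*b"
  then have "i div 2 \<in> {a..b}" "i = 2*(i div 2)" by auto
  then show "i \<in> (\<lambda>m. 2*m)`{a..b}" by blast
qed

lemma inj_odd: "1 \<le> a \<Longrightarrow> inj_on (\<lambda>m::nat. 2*m-1) {a..b}"
  by (auto simp: inj_on_def)
lemma inj_even: "inj_on (\<lambda>m::nat. 2*m) A"
  by (auto simp: inj_on_def)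

lemma LD_J:
  assumes "2*k \<le> n" "\<forall>i\<in>{1..n}. x i \<noteq> 0" "i\<in>{1..n}"
  shows "x i * pd (Jfun k) i x = Jfun k x * eJ k i"
proof -
  have J: "Jfun k = (\<lambda>y. (\<Prod>m\<in>{1..k}. y (2*m-1)) / (\<Prod>m\<in>{1..k}. y (2*m)))"
    by (rule ext) (simp add: Jfun_def)
  have d: "(\<lambda>m::nat. 2*m-1)`{1..k} \<inter> (\<lambda>m. 2*m)`{1..k} = {}" by auto presburger
  have "\<forall>m\<in>{1..k}. 2*m-1 \<in> {1..n}" using assms(1) by auto
  then have nz1: "\<forall>m\<in>{1..k}. x (2*m-1) \<noteq> 0" using assms(2) by blast
  have nz2: "\<forall>m\<in>{1..k}. x (2*m) \<noteq> 0" using assms(1,2) by auto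
  have xi: "x i \<noteq> 0" using assms by auto
  have e: "ev (\<lambda>m. 2*m-1) {1..k} (\<lambda>m. 2*m) {1..k} i = eJ k i"
    using assms(3) unfolding ev_def eJ_def mem_even mem_odd[OF order_refl]
    by (auto simp: minus_one_power_iff) presburger+
  show ?thesis unfolding J
    using LD_mono[OF _ _ inj_odd[OF order_refl] inj_even d nz1 nz2 xi] e
    by (simp add: Jfun_def)
qed

lemma LD_C:
  assumes "odd n" "\<forall>i\<in>{1..n}. x i \<noteq> 0" "i\<in>{1..n}"
  shows "x i * pd (Cfun n) i x = Cfun n x * eC i"
proof -
  have J: "Cfun n = (\<lambda>y. (\<Prod>m\<in>{1..(n+1) div 2}. y (2*m-1)) / (\<Prod>m\<in>{1..(n-1) div 2}. y (2*m)))"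
    by (rule ext) (simp add: Cfun_def)
  have d: "(\<lambda>m::nat. 2*m-1)`{1..(n+1) div 2} \<inter> (\<lambda>m. 2*m)`{1..(n-1) div 2} = {}" by auto presburger
  have "\<forall>m\<in>{1..(n+1) div 2}. 2*m-1 \<in> {1..n}" using assms(1) by auto presburger
  then have nz1: "\<forall>m\<in>{1..(n+1) div 2}. x (2*m-1) \<noteq> 0" using assms(2) by blast
  have nz2: "\<forall>m\<in>{1..(n-1) div 2}. x (2*m) \<noteq> 0" using assms(1,2) by auto
  have xi: "x i \<noteq> 0" using assms by auto
  have e: "ev (\<lambda>m. 2*m-1) {1..(n+1) div 2} (\<lambda>m. 2*m) {1..(n-1) div 2} i = eC i"
    using assms(1,3) unfolding ev_def eC_def mem_even mem_odd[OF order_refl]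
    by (auto simp: minus_one_power_iff) presburger+
  show ?thesis unfolding J
    using LD_mono[OF _ _ inj_odd[OF order_refl] inj_even d nz1 nz2 xi] e
    by (simp add: Cfun_def)
qed

lemma LD_coord:
  shows "x i * pd (\<lambda>y. y j) i x = (if i = j then x j else 0)"
proof (cases "i = j")
  case True
  have "((\<lambda>t. (x(i:=t)) j) has_real_derivative 1) (at (x i))"
    using True by (simp add: DERIV_ident)
  then show ?thesis using True unfolding pd_def by (simp add: DERIV_imp_deriv)
next
  case False
  have "((\<lambda>t. (x(i:=t)) j) has_real_derivative 0) (at (x i))"
    using False by simp
  then show ?thesis using False unfolding pd_def by (simp add: DERIV_imp_deriv)
qed

lemma LD_H:
  assumes "i\<in>{1..n}"
  shows "x i * pd (Hfun n a) i x = 1 * Gs (\<lambda>j. a j * x j) n i"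
  using assms DERIV_imp_deriv[OF vfun_deriv[of a n x i]] unfolding pd_def Hfun_def Gs_def by simp

lemma vfun_ps: "vfun a p x = ps (\<lambda>j. a j * x j) p"
  by (simp add: vfun_def ps_def)

lemma LD_F_odd:
  assumes "odd n" "1 \<le> k" "k \<le> n div 2" "\<forall>i\<in>{1..n}. x i \<noteq> 0" "i\<in>{1..n}"
  shows "x i * pd (Ffun n a k) i x = ((\<Prod>m\<in>{k+1..(n+1) div 2}. x (2*m-1)) / (\<Prod>m\<in>{k..(n-1) div 2}. x (2*m)))
      * Gs (\<lambda>j. a j * x j) (2*k-1) i"
proof -
  have F: "Ffun n a k = (\<lambda>y. vfun a (2*k-1) y * (\<Prod>m\<in>{k+1..(n+1) div 2}. y (2*m-1)) / (\<Prod>m\<in>{k..(n-1) div 2}. y (2*m)))"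
    by (rule ext) (simp add: Ffun_def assms(1))
  have d: "(\<lambda>m::nat. 2*m-1)`{k+1..(n+1) div 2} \<inter> (\<lambda>m. 2*m)`{k..(n-1) div 2} = {}" by auto presburger
  have "\<forall>m\<in>{k+1..(n+1) div 2}. 2*m-1 \<in> {1..n}" using assms(1) by auto presburger
  then have nz1: "\<forall>m\<in>{k+1..(n+1) div 2}. x (2*m-1) \<noteq> 0" using assms(4) by blast
  have "\<forall>m\<in>{k..(n-1) div 2}. 2*m \<in> {1..n}" using assms(1,2) by auto
  then have nz2: "\<forall>m\<in>{k..(n-1) div 2}. x (2*m) \<noteq> 0" using assms(4) by blast
  have xi: "x i \<noteq> 0" using assms by auto
  have gt: "\<forall>j\<in>(\<lambda>m::nat. 2*m-1)`{k+1..(n+1) div 2} \<union> (\<lambda>m. 2*m)`{k..(n-1) div 2}. 2*k-1 < j"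
    using assms(2) by auto
  have i1: "1 \<le> k+1" by simp
  have e: "ev (\<lambda>m. 2*m-1) {k+1..(n+1) div 2} (\<lambda>m. 2*m) {k..(n-1) div 2} i = (if i \<le> 2*k-1 then 0 else (-1)^(i-(2*k-1)))"
    using assms(1,2,5) unfolding ev_def mem_even mem_odd[OF i1]
    by (auto simp: minus_one_power_iff) presburger+
  show ?thesis unfolding F
    using LD_vmono[OF _ _ inj_odd[OF i1] inj_even d nz1 nz2 xi gt, of a] e assms(5)
    by (auto simp: Gs_def vfun_ps)
qed

lemma LD_F_even:
  assumes "even n" "1 \<le> k" "k \<le> n div 2" "\<forall>i\<in>{1..n}. x i \<noteq> 0" "i\<in>{1..n}"
  shows "x i * pd (Ffun n a k) i x = ((\<Prod>m\<in>{k+1..n div 2}. x (2*m)) / (\<Prod>m\<in>{k+1..n div 2}. x (2*m-1)))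
      * Gs (\<lambda>j. a j * x j) (2*k) i"
proof -
  have F: "Ffun n a k = (\<lambda>y. vfun a (2*k) y * (\<Prod>m\<in>{k+1..n div 2}. y (2*m)) / (\<Prod>m\<in>{k+1..n div 2}. y (2*m-1)))"
    by (rule ext) (simp add: Ffun_def assms(1))
  have d: "(\<lambda>m::nat. 2*m)`{k+1..n div 2} \<inter> (\<lambda>m. 2*m-1)`{k+1..n div 2} = {}" by auto presburger
  have "\<forall>m\<in>{k+1..n div 2}. 2*m-1 \<in> {1..n}" using assms(1) by auto
  then have nz2: "\<forall>m\<in>{k+1..n div 2}. x (2*m-1) \<noteq> 0" using assms(4) by blast
  have "\<forall>m\<in>{k+1..n div 2}. 2*m \<in> {1..n}" using assms(1,2) by auto
  then have nz1: "\<forall>m\<in>{k+1..n div 2}. x (2*m) \<noteq> 0" using assms(4) by blast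
  have xi: "x i \<noteq> 0" using assms by auto
  have gt: "\<forall>j\<in>(\<lambda>m::nat. 2*m)`{k+1..n div 2} \<union> (\<lambda>m. 2*m-1)`{k+1..n div 2}. 2*k < j"
    using assms(2) by auto
  have i1: "1 \<le> k+1" by simp
  have e: "ev (\<lambda>m. 2*m) {k+1..n div 2} (\<lambda>m. 2*m-1) {k+1..n div 2} i = (if i \<le> 2*k then 0 else (-1)^(i-(2*k)))"
    using assms(1,2,5) unfolding ev_def mem_even mem_odd[OF i1]
    by (auto simp: minus_one_power_iff) presburger+
  show ?thesis unfolding F
    using LD_vmono[OF _ _ inj_even inj_odd[OF i1] d nz1 nz2 xi gt, of a] e assms(5)
    by (auto simp: Gs_def vfun_ps)
qed



lemma K_zero:
  assumes "p \<le> N" "q \<le> N" "even (p+q)"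
  shows "(\<Sum>m\<in>{1..N}. ps (Gs u p) (m-1) * ps (Gs u q) m - ps (Gs u p) m * ps (Gs u q) (m-1)) = 0"
proof (cases "p \<le> q")
  case True
  then have "even (q-p)" using assms(3) by presburger
  from K_formula[OF True this, where N=N and u=u] show ?thesis using assms True by auto
next
  case False
  then have pq: "q \<le> p" "even (p-q)" using assms(3) by presburger+
  from K_formula[OF pq, where N=N and u=u] have
    "(\<Sum>m\<in>{1..N}. ps (Gs u q) (m-1) * ps (Gs u p) m - ps (Gs u q) m * ps (Gs u p) (m-1)) = 0"
    using assms pq by auto
  then have "- (\<Sum>m\<in>{1..N}. ps (Gs u q) (m-1) * ps (Gs u p) m - ps (Gs u q) m * ps (Gs u p) (m-1)) = 0" by simp
  then show ?thesis unfolding sum_negf[symmetric] by (simp add: algebra_simps)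
qed

definition pF :: "nat \<Rightarrow> nat \<Rightarrow> nat" where "pF n k = (if odd n then 2*k-1 else 2*k)"
definition MF :: "nat \<Rightarrow> nat \<Rightarrow> (nat \<Rightarrow> real) \<Rightarrow> real" where
  "MF n k x = (if odd n then (\<Prod>m\<in>{k+1..(n+1) div 2}. x (2*m-1)) / (\<Prod>m\<in>{k..(n-1) div 2}. x (2*m))
     else (\<Prod>m\<in>{k+1..n div 2}. x (2*m)) / (\<Prod>m\<in>{k+1..n div 2}. x (2*m-1)))"

lemma LD_F:
  assumes "1 \<le> k" "k \<le> n div 2" "\<forall>i\<in>{1..n}. x i \<noteq> 0"
  shows "\<forall>i\<in>{1..n}. x i * pd (Ffun n a k) i x = MF n k x * Gs (\<lambda>j. a j * x j) (pF n k) i"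
  using LD_F_odd[OF _ assms] LD_F_even[OF _ assms] unfolding MF_def pF_def by auto

lemma pF_props: "1 \<le> k \<Longrightarrow> 1 \<le> l \<Longrightarrow> k \<le> n div 2 \<Longrightarrow> pF n k \<le> n \<and> (even (pF n k + pF n l)) \<and> even (pF n k + n)"
  unfolding pF_def by auto

theorem proposition2p2:
  fixes n :: nat and a :: "nat \<Rightarrow> real"
  assumes "n \<ge> 1" and "\<exists>i\<in>{1..n}. a i \<noteq> 0"
  shows "(\<forall>k\<in>{1..n div 2}. \<forall>l\<in>{1..n div 2}. \<forall>x. (\<forall>i\<in>{1..n}. x i \<noteq> 0) \<longrightarrow>
            pbracket n (Jfun k) (Jfun l) x = 0
          \<and> pbracket n (Ffun n a k) (Ffun n a l) x = 0
          \<and> pbracket n (Ffun n a k) (Hfun n a) x = 0)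
       \<and> (odd n \<longrightarrow> (\<forall>j\<in>{1..n}. \<forall>x. (\<forall>i\<in>{1..n}. x i \<noteq> 0) \<longrightarrow>
            pbracket n (Cfun n) (\<lambda>y. y j) x = 0))"
proof (intro conjI ballI allI impI)
  fix k l and x :: "nat \<Rightarrow> real" assume k: "k \<in> {1..n div 2}" and l: "l \<in> {1..n div 2}" and x: "\<forall>i\<in>{1..n}. x i \<noteq> 0"
  have k2: "2*k \<le> n" "1 \<le> k" "k \<le> n div 2" using k by auto
  have l2: "2*l \<le> n" "1 \<le> l" "l \<le> n div 2" using l by auto
  show "pbracket n (Jfun k) (Jfun l) x = 0"
    using bracket_scaled[of n x "Jfun k" "Jfun k x" "eJ k" "Jfun l" "Jfun l x" "eJ l"]
      LD_J[OF k2(1) x] LD_J[OF l2(1) x] J_sum by simp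
  have pk: "pF n k \<le> n" "even (pF n k + pF n l)" "even (pF n k + n)" using pF_props[OF k2(2) l2(2) k2(3)] by auto
  have pl: "pF n l \<le> n" using pF_props[OF l2(2) l2(2) l2(3)] by auto
  show "pbracket n (Ffun n a k) (Ffun n a l) x = 0"
    using bracket_scaled[OF LD_F[OF k2(2,3) x] LD_F[OF l2(2,3) x]] K_zero[OF pk(1) pl pk(2)] by simp
  have H: "\<forall>i\<in>{1..n}. x i * pd (Hfun n a) i x = 1 * Gs (\<lambda>j. a j * x j) n i" using LD_H by blast
  show "pbracket n (Ffun n a k) (Hfun n a) x = 0"
    using bracket_scaled[OF LD_F[OF k2(2,3) x] H] K_zero[OF pk(1) order_refl pk(3)] by simp
next
  fix j and x :: "nat \<Rightarrow> real" assume n: "odd n" and j: "j \<in> {1..n}" and x: "\<forall>i\<in>{1..n}. x i \<noteq> 0"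
  have C: "\<forall>i\<in>{1..n}. x i * pd (Cfun n) i x = Cfun n x * eC i" using LD_C[OF n x] by blast
  have Y: "\<forall>i\<in>{1..n}. x i * pd (\<lambda>y. y j) i x = 1 * (if i = j then x j else 0)" using LD_coord by simp
  show "pbracket n (Cfun n) (\<lambda>y. y j) x = 0"
    using bracket_scaled[OF C Y] C_sum[where j=j and N=n and c="x j"] j n by simp
qed

end
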